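(* Let $(P,\le,A_1\ldots A_k)$ be a regular poset, let $t\in[3,k]$, and suppose $A_t$ is inserted between two antichains $A_p\sqsubset A_s$ that are consecutive in $(\{A_1,\dots,A_{t-1}\},\sqsubseteq)$ (so that $A_p\sqsubset A_t\sqsubset A_s$ are consecutive in $(\{A_1,\dots,A_t\},\sqsubseteq)$). Then for every node $M$ of $(A_p,A_t,<)$ or of $(A_t,A_s,<)$ there is a unique node $N$ of $(A_p,A_s,<)$ such that $\mathrm{Int}(M)\subset\mathrm{Int}(N)$.
   Context: Let $(P,\le)$ be a finite poset of width $w$. For $A\subseteq P$ let $A{\uparrow}=\{y\in P: x\le y\text{ for some }x\in A\}$ and $A{\downarrow}=\{y\in P: y\le x\text{ for some }x\in A\}$. For maximal antichains $A,B$ write $A\sqsubseteq B$ if $A\subseteq B{\downarrow}$, and $A\sqsubset B$ if also $A\ne B$. For disjoint antichains $A\sqsubset B$, $(A,B,<)$ denotes the bipartite graph with classes $A,B$ and an edge $(a<b)$ for each $a\in A$, $b\in B$ with $a<b$; it is regular if every edge lies in some perfect matching. A regular poset is a triple $(P,\le,A_1\ldots A_k)$ where $A_1,\dots,A_k$ are maximum antichains of $P$ such that: they partition $P$; $(\{A_1,\dots,A_k\},\sqsubseteq)$ is a linear order with minimum $A_1$ and maximum $A_2$; $a<b$ for all $a\in A_1$, $b\in A_2$; and for every $t\in[2,k]$ and every two antichains $A_p\sqsubset A_s$ consecutive in $(\{A_1,\dots,A_t\},\sqsubseteq)$, the bipartite graph $(A_p,A_s,<)$ is regular. For two such consecutive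 antichains $A_p\sqsubset A_s$, a node of $(A_p,A_s,<)$ is a bipartite graph $(X,Y,<)$ with $X\subseteq A_p$, $Y\subseteq A_s$ and $X\cup Y$ the vertex set of a connected component of $(A_p,A_s,<)$. For a node $N=(X,Y,<)$, $\mathrm{Int}(N)=X{\uparrow}\cap Y{\downarrow}$. *)

theory Defs
  imports Main
begin

text \<open>Finite posets are represented as a finite carrier P :: 'a set inside a type
  'a of class order; the order of the poset is the restriction of the type order.\<close>

definition antichain :: "'a::order set \<Rightarrow> bool" where
  "antichain A \<longleftrightarrow> (\<forall>x\<in>A. \<forall>y\<in>A. x \<le> y \<longrightarrow> x = y)"

definition width :: "'a::order set \<Rightarrow> nat" where
  "width P = Max {card A | A. A \<subseteq> P \<and> antichain A}"

definition maximum_antichain :: "'a::order set \<Rightarrow> 'a set \<Rightarrow> bool" where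
  "maximum_antichain P A \<longleftrightarrow> A \<subseteq> P \<and> antichain A \<and> card A = width P"

definition up_set :: "'a::order set \<Rightarrow> 'a set \<Rightarrow> 'a set" where
  "up_set P A = {y\<in>P. \<exists>x\<in>A. x \<le> y}"

definition down_set :: "'a::order set \<Rightarrow> 'a set \<Rightarrow> 'a set" where
  "down_set P A = {y\<in>P. \<exists>x\<in>A. y \<le> x}"

definition ac_le :: "'a::order set \<Rightarrow> 'a set \<Rightarrow> 'a set \<Rightarrow> bool" where
  "ac_le P A B \<longleftrightarrow> A \<subseteq> down_set P B"

definition ac_less :: "'a::order set \<Rightarrow> 'a set \<Rightarrow> 'a set \<Rightarrow> bool" where
  "ac_less P A B \<longleftrightarrow> ac_le P A B \<and> A \<noteq> B"

definition bip_edges :: "'a::order set \<Rightarrow> 'a set \<Rightarrow> ('a \<times> 'a) set" where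
  "bip_edges A B = {(a,b). a \<in> A \<and> b \<in> B \<and> a < b}"

definition perfect_matching :: "'a::order set \<Rightarrow> 'a set \<Rightarrow> ('a \<times> 'a) set \<Rightarrow> bool" where
  "perfect_matching A B M \<longleftrightarrow> M \<subseteq> bip_edges A B
     \<and> (\<forall>a\<in>A. \<exists>!b. (a,b) \<in> M) \<and> (\<forall>b\<in>B. \<exists>!a. (a,b) \<in> M)"

definition regular_bip :: "'a::order set \<Rightarrow> 'a set \<Rightarrow> bool" where
  "regular_bip A B \<longleftrightarrow>
     (\<forall>e\<in>bip_edges A B. \<exists>M. perfect_matching A B M \<and> e \<in> M)"

definition bip_adj :: "'a::order set \<Rightarrow> 'a set \<Rightarrow> 'a \<Rightarrow> 'a \<Rightarrow> bool" where
  "bip_adj A B x y \<longleftrightarrow> (x, y) \<in> bip_edges A B \<or> (y, x) \<in> bip_edges A B"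

definition bip_component :: "'a::order set \<Rightarrow> 'a set \<Rightarrow> 'a \<Rightarrow> 'a set" where
  "bip_component A B v = {u. (bip_adj A B)\<^sup>*\<^sup>* v u}"

definition is_node :: "'a::order set \<Rightarrow> 'a set \<Rightarrow> 'a set \<times> 'a set \<Rightarrow> bool" where
  "is_node A B N \<longleftrightarrow> (case N of (X, Y) \<Rightarrow> X \<subseteq> A \<and> Y \<subseteq> B \<and>
      (\<exists>v\<in>A \<union> B. X \<union> Y = bip_component A B v))"

definition Int_node :: "'a::order set \<Rightarrow> 'a set \<times> 'a set \<Rightarrow> 'a set" where
  "Int_node P N = (case N of (X, Y) \<Rightarrow> up_set P X \<inter> down_set P Y)"

definition consecutive :: "'a::order set \<Rightarrow> (nat \<Rightarrow> 'a set) \<Rightarrow> nat \<Rightarrow> nat \<Rightarrow> nat \<Rightarrow> bool" where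
  "consecutive P A t p s \<longleftrightarrow> p \<in> {1..t} \<and> s \<in> {1..t} \<and> ac_less P (A p) (A s) \<and>
     \<not> (\<exists>q\<in>{1..t}. ac_less P (A p) (A q) \<and> ac_less P (A q) (A s))"

definition regular_poset :: "'a::order set \<Rightarrow> (nat \<Rightarrow> 'a set) \<Rightarrow> nat \<Rightarrow> bool" where
  "regular_poset P A k \<longleftrightarrow>
     finite P \<and>
     (\<forall>i\<in>{1..k}. maximum_antichain P (A i)) \<and>
     \<comment> \<open>partition of P\<close>
     (\<forall>i\<in>{1..k}. A i \<noteq> {}) \<and>
     (\<forall>i\<in>{1..k}. \<forall>j\<in>{1..k}. i \<noteq> j \<longrightarrow> A i \<inter> A j = {}) \<and>
     (\<Union>i\<in>{1..k}. A i) = P \<and>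
     \<comment> \<open>linear order under \<sqsubseteq> with minimum A_1 and maximum A_2\<close>
     1 \<le> k \<and> 2 \<le> k \<and>
     (\<forall>i\<in>{1..k}. \<forall>j\<in>{1..k}. ac_le P (A i) (A j) \<or> ac_le P (A j) (A i)) \<and>
     (\<forall>i\<in>{1..k}. ac_le P (A 1) (A i) \<and> ac_le P (A i) (A 2)) \<and>
     (\<forall>a\<in>A 1. \<forall>b\<in>A 2. a < b) \<and>
     (\<forall>t\<in>{2..k}. \<forall>p s. consecutive P A t p s \<longrightarrow> regular_bip (A p) (A s))"

end

theory Submission
  imports Defs
begin

lemma adj_sym: "bip_adj A B x y = bip_adj A B y x"
  by (auto simp: bip_adj_def)

lemma rt_sym: "(bip_adj A B)\<^sup>*\<^sup>* x y \<Longrightarrow> (bip_adj A B)\<^sup>*\<^sup>* y x"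
proof (induction rule: rtranclp_induct)
  case base then show ?case by simp
next
  case (step y z)
  then show ?case using adj_sym
    by (metis converse_rtranclp_into_rtranclp)
qed

lemma comp_refl: "v \<in> bip_component A B v"
  by (simp add: bip_component_def)

lemma comp_step: "u \<in> bip_component A B v \<Longrightarrow> bip_adj A B u w \<Longrightarrow> w \<in> bip_component A B v"
  by (auto simp: bip_component_def)

lemma comp_eq: "u \<in> bip_component A B v \<Longrightarrow> bip_component A B u = bip_component A B v"
  unfolding bip_component_def using rt_sym[of A B v u]
  by (auto intro: rtranclp_trans)

lemma comp_sub: "v \<in> A \<union> B \<Longrightarrow> bip_component A B v \<subseteq> A \<union> B"
proof
  fix u assume "v \<in> A \<union> B" "u \<in> bip_component A B v"
  then have "(bip_adj A B)\<^sup>*\<^sup>* v u" by (simp add: bip_component_def)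
  then show "u \<in> A \<union> B" using \<open>v \<in> A \<union> B\<close>
    by (induction rule: rtranclp_induct) (auto simp: bip_adj_def bip_edges_def)
qed

lemma inv_rt: "(bip_adj A B)\<^sup>*\<^sup>* v u \<Longrightarrow> (\<And>a b. bip_adj A B a b \<Longrightarrow> I a = I b) \<Longrightarrow> I v = I u"
  by (induction rule: rtranclp_induct) auto

lemma inv_comp: "u \<in> bip_component A B v \<Longrightarrow> (\<And>a b. bip_adj A B a b \<Longrightarrow> I a = I b) \<Longrightarrow> I v = I u"
  using inv_rt by (metis bip_component_def mem_Collect_eq)

lemma node_eq:
  assumes "A \<inter> B = {}" "is_node A B (X, Y)"
  shows "\<exists>v\<in>A \<union> B. X = bip_component A B v \<inter> A \<and> Y = bip_component A B v \<inter> B"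
proof -
  obtain v where v: "v \<in> A \<union> B" "X \<union> Y = bip_component A B v" "X \<subseteq> A" "Y \<subseteq> B"
    using assms(2) unfolding is_node_def by auto
  then have "X = bip_component A B v \<inter> A \<and> Y = bip_component A B v \<inter> B"
    using assms(1) by blast
  then show ?thesis using v by blast
qed

lemma node_intro:
  assumes "w \<in> A \<union> B"
  shows "is_node A B (bip_component A B w \<inter> A, bip_component A B w \<inter> B)"
  using assms comp_sub[OF assms] unfolding is_node_def by blast

lemma max_ac:
  assumes "finite P" "maximum_antichain P A" "z \<in> P"
  shows "\<exists>a\<in>A. a \<le> z \<or> z \<le> a"
proof (rule ccontr)
  assume H: "\<not> ?thesis"
  have fin: "finite {card B | B. B \<subseteq> P \<and> antichain B}"
    by (rule finite_subset[where B="card ` Pow P"]) (auto intro: finite_imageI simp: assms(1))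
  have zA: "z \<notin> A" using H by auto
  have "antichain (insert z A)" using H assms(2)
    unfolding maximum_antichain_def antichain_def by auto
  moreover have "insert z A \<subseteq> P" using assms unfolding maximum_antichain_def by auto
  ultimately have "card (insert z A) \<le> width P"
    unfolding width_def using fin by (auto intro!: Max_ge)
  moreover have "finite A" using assms unfolding maximum_antichain_def
    by (meson finite_subset)
  ultimately have "card A + 1 \<le> width P" using zA by simp
  then show False using assms(2) unfolding maximum_antichain_def by simp
qed

lemma up_strict:
  assumes "a \<in> A" "A \<subseteq> down_set P B" "A \<inter> B = {}"
  shows "\<exists>b\<in>B. a < b"
proof -
  obtain b where "b \<in> B" "a \<le> b" using assms unfolding down_set_def by blast
  moreover have "a \<noteq> b" using assms(1,3) \<open>b \<in> B\<close> by blast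
  ultimately show ?thesis using order.order_iff_strict by blast
qed

lemma case1:
  fixes P Ap At As :: "'a::order set"
  assumes aP: "Ap \<subseteq> P" and tP: "At \<subseteq> P" and sP: "As \<subseteq> P"
    and acp: "antichain Ap" and act: "antichain At" and acs: "antichain As"
    and d1: "Ap \<inter> At = {}" and d2: "At \<inter> As = {}" and d3: "Ap \<inter> As = {}"
    and pt: "Ap \<subseteq> down_set P At" and ts: "At \<subseteq> down_set P As" and ps: "Ap \<subseteq> down_set P As"
    and maxp: "\<forall>z\<in>P. \<exists>a\<in>Ap. a \<le> z \<or> z \<le> a"
    and node: "is_node Ap At M"
  shows "\<exists>!N. is_node Ap As N \<and> Int_node P M \<subset> Int_node P N"
proof -
  obtain X Y where M: "M = (X, Y)" by (cases M)
  obtain v where v: "v \<in> Ap \<union> At" "X = bip_component Ap At v \<inter> Ap" "Y = bip_component Ap At v \<inter> At"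
    using node_eq[OF d1] node M by blast
  have upT: "\<exists>y\<in>At. a < y" if "a \<in> Ap" for a
    using up_strict[OF that pt d1] .
  have upS: "\<exists>b\<in>As. a < b" if "a \<in> Ap" for a
    using up_strict[OF that ps d3] .
  have upS2: "\<exists>b\<in>As. a < b" if "a \<in> At" for a
    using up_strict[OF that ts d2] .
  have downP: "\<exists>a\<in>Ap. a < y" if "y \<in> At" for y
  proof -
    have "y \<in> P" using that tP by blast
    then obtain a where a: "a \<in> Ap" "a \<le> y \<or> y \<le> a" using maxp by blast
    have ne: "a \<noteq> y" using a(1) d1 that by blast
    show ?thesis
    proof (cases "a \<le> y")
      case True
      then show ?thesis using a(1) ne order.order_iff_strict by blast
    next
      case False
      then have ya: "y \<le> a" using a by simp
      obtain y' where y': "y' \<in> At" "a \<le> y'" using pt a(1) unfolding down_set_def by auto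
      have "y \<le> y'" using ya y'(2) by (rule order.trans)
      then have "y = y'" using act y'(1) that unfolding antichain_def by blast
      then show ?thesis using ya y'(2) False by simp
    qed
  qed
  obtain x0 where x0: "x0 \<in> X"
  proof (cases "v \<in> Ap")
    case True
    then have "v \<in> X" using v(2) comp_refl[of v Ap At] by blast
    then show ?thesis using that by blast
  next
    case False
    then have "v \<in> At" using v(1) by blast
    then obtain a where a: "a \<in> Ap" "a < v" using downP by blast
    then have "bip_adj Ap At v a" using \<open>v \<in> At\<close> by (auto simp: bip_adj_def bip_edges_def)
    then have "a \<in> bip_component Ap At v" by (rule comp_step[OF comp_refl])
    then have "a \<in> X" using v(2) a(1) by blast
    then show ?thesis using that by blast
  qed
  have x0A: "x0 \<in> Ap" using x0 v(2) by blast
  define C where "C = bip_component Ap As x0"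
  define I where "I u \<longleftrightarrow> (u \<in> Ap \<longrightarrow> u \<in> C) \<and> (u \<in> At \<longrightarrow> (\<forall>b\<in>As. u \<le> b \<longrightarrow> b \<in> C))" for u
  have I1: "I a = I y" if "a \<in> Ap" "y \<in> At" "a < y" for a y
  proof
    assume "I a"
    then have "a \<in> C" using that unfolding I_def by auto
    have "b \<in> C" if "b \<in> As" "y \<le> b" for b
    proof -
      have "bip_adj Ap As a b" using \<open>a \<in> Ap\<close> \<open>a < y\<close> that
        by (auto simp: bip_adj_def bip_edges_def intro: less_le_trans)
      then show ?thesis using \<open>a \<in> C\<close> comp_step unfolding C_def by metis
    qed
    then show "I y" using that d1 d2 unfolding I_def by auto
  next
    assume "I y"
    obtain b where b: "b \<in> As" "y < b" using upS2 \<open>y \<in> At\<close> by blast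
    then have "b \<in> C" using \<open>I y\<close> that unfolding I_def by auto
    have "bip_adj Ap As b a" using b that
      by (auto simp: bip_adj_def bip_edges_def intro: less_trans)
    then have "a \<in> C" using \<open>b \<in> C\<close> comp_step unfolding C_def by metis
    then show "I a" using that d1 unfolding I_def by auto
  qed
  have Istep: "I a = I b" if "bip_adj Ap At a b" for a b
    using that I1 unfolding bip_adj_def bip_edges_def by auto
  have Ix0: "I x0" using x0A d1 comp_refl unfolding I_def C_def by blast
  have Iall: "I u" if "u \<in> bip_component Ap At v" for u
  proof -
    have "I v = I x0" using inv_comp[of x0 Ap At v I] x0 v Istep by blast
    moreover have "I v = I u" using inv_comp[of u Ap At v I] that Istep by blast
    ultimately show ?thesis using Ix0 by simp
  qed
  define N where "N = (C \<inter> Ap, C \<inter> As)"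
  have nodeN: "is_node Ap As N" unfolding N_def C_def using node_intro x0A by blast
  have sub: "Int_node P M \<subseteq> Int_node P N"
  proof
    fix z assume "z \<in> Int_node P M"
    then obtain x y where z: "z \<in> P" "x \<in> X" "x \<le> z" "y \<in> Y" "z \<le> y"
      unfolding M Int_node_def up_set_def down_set_def by auto
    have "x \<in> Ap" "x \<in> bip_component Ap At v" using z(2) v(2) by blast+
    then have "x \<in> C" using Iall unfolding I_def by blast
    have "y \<in> At" "y \<in> bip_component Ap At v" using z(4) v(3) by blast+
    obtain b where b: "b \<in> As" "y \<le> b" using ts \<open>y \<in> At\<close> unfolding down_set_def by blast
    have "b \<in> C" using Iall[OF \<open>y \<in> bip_component Ap At v\<close>] \<open>y \<in> At\<close> b unfolding I_def by blast
    have "x \<in> Ap" using z(2) v(2) by blast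
    have "z \<le> b" using z(5) b(2) by (rule order.trans)
    show "z \<in> Int_node P N" unfolding N_def Int_node_def up_set_def down_set_def
      using z(1,3) b(1) \<open>z \<le> b\<close> \<open>x \<in> Ap\<close> \<open>x \<in> C\<close> \<open>b \<in> C\<close> by blast
  qed
  obtain b0 where b0: "b0 \<in> As" "x0 < b0" using upS x0A by blast
  have b0C: "b0 \<in> C" unfolding C_def using comp_step[OF comp_refl, of Ap As x0 b0] b0 x0A
    by (auto simp: bip_adj_def bip_edges_def)
  have "b0 \<in> Int_node P N"
  proof -
    have "x0 \<in> C \<inter> Ap" using x0A comp_refl[of x0 Ap As] unfolding C_def by blast
    moreover have "b0 \<in> C \<inter> As" using b0C b0(1) by blast
    moreover have "b0 \<in> P" using b0(1) sP by blast
    ultimately show ?thesis unfolding N_def Int_node_def up_set_def down_set_def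
      using b0(2) by (auto intro: less_imp_le)
  qed
  moreover have "b0 \<notin> Int_node P M"
  proof
    assume "b0 \<in> Int_node P M"
    then obtain y where y: "y \<in> Y" "b0 \<le> y" unfolding M Int_node_def down_set_def by auto
    then have yt: "y \<in> At" using v(3) by blast
    obtain b' where b': "b' \<in> As" "y \<le> b'" using ts yt unfolding down_set_def by auto
    have "b0 \<le> b'" using y(2) b'(2) by (rule order.trans)
    then have "b0 = b'" using acs b0(1) b'(1) unfolding antichain_def by blast
    then have "y = b0" using y b' by simp
    then show False using yt b0 d2 by auto
  qed
  ultimately have strict: "Int_node P M \<subset> Int_node P N" using sub by blast
  show ?thesis
  proof (rule ex1I[of _ N])
    show "is_node Ap As N \<and> Int_node P M \<subset> Int_node P N" using nodeN strict by simp
  next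
    fix N2 assume H: "is_node Ap As N2 \<and> Int_node P M \<subset> Int_node P N2"
    obtain X2 Y2 where N2: "N2 = (X2, Y2)" by (cases N2)
    obtain w where w: "w \<in> Ap \<union> As" "X2 = bip_component Ap As w \<inter> Ap" "Y2 = bip_component Ap As w \<inter> As"
      using node_eq[OF d3] H N2 by blast
    obtain y where y: "y \<in> At" "x0 < y" using upT x0A by blast
    have "bip_adj Ap At x0 y" using y x0A by (auto simp: bip_adj_def bip_edges_def)
    moreover have "x0 \<in> bip_component Ap At v" using x0 v(2) by blast
    ultimately have "y \<in> bip_component Ap At v" using comp_step by metis
    then have "y \<in> Y" using v(3) y(1) by blast
    moreover have "x0 \<le> y" using y(2) by (rule less_imp_le)
    moreover have "x0 \<in> P" using x0A aP by blast
    ultimately have "x0 \<in> Int_node P M" unfolding M Int_node_def up_set_def down_set_def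
      using x0 by blast
    then have "x0 \<in> Int_node P N2" using H by blast
    then obtain x2 where "x2 \<in> X2" "x2 \<le> x0" unfolding N2 Int_node_def up_set_def by auto
    moreover have "x2 \<in> Ap" using \<open>x2 \<in> X2\<close> w(2) by blast
    ultimately have "x2 = x0" using acp x0A unfolding antichain_def by blast
    then have "x0 \<in> bip_component Ap As w" using \<open>x2 \<in> X2\<close> w by auto
    then have "bip_component Ap As w = C" unfolding C_def using comp_eq by metis
    then show "N2 = N" using N2 w unfolding N_def by simp
  qed
qed

lemma down_strict:
  assumes "b \<in> B" "B \<subseteq> P" "\<forall>z\<in>P. \<exists>a\<in>A. a \<le> z \<or> z \<le> a" "A \<subseteq> down_set P B"
    "antichain B" "A \<inter> B = {}"
  shows "\<exists>a\<in>A. a < b"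
proof -
  have "b \<in> P" using assms(1,2) by blast
  then obtain a where a: "a \<in> A" "a \<le> b \<or> b \<le> a" using assms(3) by blast
  have ne: "a \<noteq> b" using a(1) assms(1,6) by blast
  show ?thesis
  proof (cases "a \<le> b")
    case True
    then show ?thesis using a(1) ne order.order_iff_strict by blast
  next
    case False
    then have ba: "b \<le> a" using a by simp
    obtain b' where b': "b' \<in> B" "a \<le> b'" using assms(4) a(1) unfolding down_set_def by auto
    have "b \<le> b'" using ba b'(2) by (rule order.trans)
    then have "b = b'" using assms(5) b'(1) assms(1) unfolding antichain_def by blast
    then show ?thesis using ba b'(2) False by simp
  qed
qed

lemma case2:
  fixes P Ap At As :: "'a::order set"
  assumes aP: "Ap \<subseteq> P" and tP: "At \<subseteq> P" and sP: "As \<subseteq> P"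
    and acp: "antichain Ap" and act: "antichain At" and acs: "antichain As"
    and d1: "Ap \<inter> At = {}" and d2: "At \<inter> As = {}" and d3: "Ap \<inter> As = {}"
    and pt: "Ap \<subseteq> down_set P At" and ts: "At \<subseteq> down_set P As" and ps: "Ap \<subseteq> down_set P As"
    and maxp: "\<forall>z\<in>P. \<exists>a\<in>Ap. a \<le> z \<or> z \<le> a"
    and maxt: "\<forall>z\<in>P. \<exists>a\<in>At. a \<le> z \<or> z \<le> a"
    and node: "is_node At As M"
  shows "\<exists>!N. is_node Ap As N \<and> Int_node P M \<subset> Int_node P N"
proof -
  obtain X Y where M: "M = (X, Y)" by (cases M)
  obtain v where v: "v \<in> At \<union> As" "X = bip_component At As v \<inter> At" "Y = bip_component At As v \<inter> As"
    using node_eq[OF d2] node M by blast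
  have upS2: "\<exists>b\<in>As. a < b" if "a \<in> At" for a
    using up_strict[OF that ts d2] .
  have downP: "\<exists>a\<in>Ap. a < y" if "y \<in> At" for y
    using down_strict[OF that tP maxp pt act d1] .
  have downPs: "\<exists>a\<in>Ap. a < y" if "y \<in> As" for y
    using down_strict[OF that sP maxp ps acs d3] .
  have downT: "\<exists>a\<in>At. a < y" if "y \<in> As" for y
    using down_strict[OF that sP maxt ts acs d2] .
  obtain y0 where y0: "y0 \<in> Y"
  proof (cases "v \<in> As")
    case True
    then have "v \<in> Y" using v(3) comp_refl[of v At As] by blast
    then show ?thesis using that by blast
  next
    case False
    then have "v \<in> At" using v(1) by blast
    then obtain b where b: "b \<in> As" "v < b" using upS2 by blast
    then have "bip_adj At As v b" using \<open>v \<in> At\<close> by (auto simp: bip_adj_def bip_edges_def)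
    then have "b \<in> bip_component At As v" by (rule comp_step[OF comp_refl])
    then have "b \<in> Y" using v(3) b(1) by blast
    then show ?thesis using that by blast
  qed
  have y0A: "y0 \<in> As" using y0 v(3) by blast
  define C where "C = bip_component Ap As y0"
  define I where "I u \<longleftrightarrow> (u \<in> As \<longrightarrow> u \<in> C) \<and> (u \<in> At \<longrightarrow> (\<forall>a\<in>Ap. a \<le> u \<longrightarrow> a \<in> C))" for u
  have I1: "I x = I b" if "x \<in> At" "b \<in> As" "x < b" for x b
  proof
    assume "I x"
    obtain a where a: "a \<in> Ap" "a < x" using downP \<open>x \<in> At\<close> by blast
    then have "a \<in> C" using \<open>I x\<close> \<open>x \<in> At\<close> unfolding I_def by auto
    have "bip_adj Ap As a b" using a \<open>b \<in> As\<close> \<open>x < b\<close>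
      by (auto simp: bip_adj_def bip_edges_def intro: less_trans)
    then have "b \<in> C" using \<open>a \<in> C\<close> comp_step unfolding C_def by metis
    then show "I b" using that d2 unfolding I_def by auto
  next
    assume "I b"
    then have "b \<in> C" using that unfolding I_def by auto
    have "a \<in> C" if "a \<in> Ap" "a \<le> x" for a
    proof -
      have "bip_adj Ap As b a" using \<open>b \<in> As\<close> \<open>x < b\<close> that
        by (auto simp: bip_adj_def bip_edges_def intro: le_less_trans)
      then show ?thesis using \<open>b \<in> C\<close> comp_step unfolding C_def by metis
    qed
    then show "I x" using that d2 unfolding I_def by auto
  qed
  have Istep: "I a = I b" if "bip_adj At As a b" for a b
    using that I1 unfolding bip_adj_def bip_edges_def by auto
  have Iy0: "I y0" using y0A d2 comp_refl[of y0 Ap As] unfolding I_def C_def by blast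
  have Iall: "I u" if "u \<in> bip_component At As v" for u
  proof -
    have "y0 \<in> bip_component At As v" using y0 v(3) by blast
    then have "I v = I y0" using inv_comp[of y0 At As v I] Istep by blast
    moreover have "I v = I u" using inv_comp[of u At As v I] that Istep by blast
    ultimately show ?thesis using Iy0 by simp
  qed
  define N where "N = (C \<inter> Ap, C \<inter> As)"
  have nodeN: "is_node Ap As N" unfolding N_def C_def using node_intro y0A by blast
  have sub: "Int_node P M \<subseteq> Int_node P N"
  proof
    fix z assume "z \<in> Int_node P M"
    then obtain x y where z: "z \<in> P" "x \<in> X" "x \<le> z" "y \<in> Y" "z \<le> y"
      unfolding M Int_node_def up_set_def down_set_def by auto
    have yA: "y \<in> As" using z(4) v(3) by blast
    have "y \<in> C" using Iall z(4) v(3) yA unfolding I_def by blast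
    have xt: "x \<in> At" using z(2) v(2) by blast
    obtain a where a: "a \<in> Ap" "a < x" using downP xt by blast
    have xc: "x \<in> bip_component At As v" using z(2) v(2) by blast
    have "a \<in> C" using Iall[OF xc] a(1) less_imp_le[OF a(2)] xt unfolding I_def by blast
    have "a \<le> z" using a(2) z(3) by (auto intro: less_imp_le order.trans)
    show "z \<in> Int_node P N" unfolding N_def Int_node_def up_set_def down_set_def
      using z(1,5) a(1) yA \<open>a \<le> z\<close> \<open>y \<in> C\<close> \<open>a \<in> C\<close> by blast
  qed
  obtain a0 where a0: "a0 \<in> Ap" "a0 < y0" using downPs y0A by blast
  have "bip_adj Ap As y0 a0" using a0 y0A by (auto simp: bip_adj_def bip_edges_def)
  then have a0C: "a0 \<in> C" unfolding C_def by (rule comp_step[OF comp_refl])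
  have "a0 \<in> Int_node P N"
  proof -
    have "y0 \<in> C \<inter> As" using y0A comp_refl[of y0 Ap As] unfolding C_def by blast
    moreover have "a0 \<in> C \<inter> Ap" using a0C a0(1) by blast
    moreover have "a0 \<in> P" using a0(1) aP by blast
    ultimately show ?thesis unfolding N_def Int_node_def up_set_def down_set_def
      using a0(2) by (auto intro: less_imp_le)
  qed
  moreover have "a0 \<notin> Int_node P M"
  proof
    assume "a0 \<in> Int_node P M"
    then obtain x where x: "x \<in> X" "x \<le> a0" unfolding M Int_node_def up_set_def by auto
    then have xt: "x \<in> At" using v(2) by blast
    obtain t' where t': "t' \<in> At" "a0 \<le> t'" using pt a0(1) unfolding down_set_def by auto
    have "x \<le> t'" using x(2) t'(2) by (rule order.trans)
    then have "x = t'" using act xt t'(1) unfolding antichain_def by blast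
    then have "x = a0" using x(2) t'(2) by simp
    then show False using xt a0(1) d1 by auto
  qed
  ultimately have strict: "Int_node P M \<subset> Int_node P N" using sub by blast
  show ?thesis
  proof (rule ex1I[of _ N])
    show "is_node Ap As N \<and> Int_node P M \<subset> Int_node P N" using nodeN strict by simp
  next
    fix N2 assume H: "is_node Ap As N2 \<and> Int_node P M \<subset> Int_node P N2"
    obtain X2 Y2 where N2: "N2 = (X2, Y2)" by (cases N2)
    obtain w where w: "w \<in> Ap \<union> As" "X2 = bip_component Ap As w \<inter> Ap" "Y2 = bip_component Ap As w \<inter> As"
      using node_eq[OF d3] H N2 by blast
    obtain x where x: "x \<in> At" "x < y0" using downT y0A by blast
    have "bip_adj At As y0 x" using x y0A by (auto simp: bip_adj_def bip_edges_def)
    moreover have "y0 \<in> bip_component At As v" using y0 v(3) by blast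
    ultimately have "x \<in> bip_component At As v" using comp_step by metis
    then have "x \<in> X" using x(1) v(2) by blast
    moreover have "y0 \<in> P" using y0A sP by blast
    ultimately have "y0 \<in> Int_node P M" unfolding M Int_node_def up_set_def down_set_def
      using y0 x(2) by (auto intro: less_imp_le)
    then have "y0 \<in> Int_node P N2" using H by blast
    then obtain y2 where "y2 \<in> Y2" "y0 \<le> y2" unfolding N2 Int_node_def down_set_def by auto
    moreover have "y2 \<in> As" using \<open>y2 \<in> Y2\<close> w(3) by blast
    ultimately have "y2 = y0" using acs y0A unfolding antichain_def by blast
    then have "y0 \<in> bip_component Ap As w" using \<open>y2 \<in> Y2\<close> w by auto
    then have "bip_component Ap As w = C" unfolding C_def using comp_eq by metis
    then show "N2 = N" using N2 w unfolding N_def by simp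
  qed
qed

theorem proposition9:
  fixes P :: "'a::order set" and A :: "nat \<Rightarrow> 'a set" and k t p s :: nat
  assumes "regular_poset P A k"
    and "t \<in> {3..k}"
    and "consecutive P A (t - 1) p s"
    and "ac_less P (A p) (A t)" and "ac_less P (A t) (A s)"
    and "is_node (A p) (A t) M \<or> is_node (A t) (A s) M"
  shows "\<exists>!N. is_node (A p) (A s) N \<and> Int_node P M \<subset> Int_node P N"
proof -
  have R: "finite P" "\<forall>i\<in>{1..k}. maximum_antichain P (A i)"
    "\<forall>i\<in>{1..k}. \<forall>j\<in>{1..k}. i \<noteq> j \<longrightarrow> A i \<inter> A j = {}"
    using assms(1) unfolding regular_poset_def by auto
  have C: "p \<in> {1..t-1}" "s \<in> {1..t-1}" "ac_less P (A p) (A s)"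
    using assms(3) unfolding consecutive_def by auto
  have idx: "p \<in> {1..k}" "s \<in> {1..k}" "t \<in> {1..k}" using C(1,2) assms(2) by auto
  have ne: "p \<noteq> t" "t \<noteq> s" "p \<noteq> s" using assms(4,5) C(3) unfolding ac_less_def by auto
  have d1: "A p \<inter> A t = {}" using R(3) idx(1,3) ne(1) by blast
  have d2: "A t \<inter> A s = {}" using R(3) idx(2,3) ne(2) by blast
  have d3: "A p \<inter> A s = {}" using R(3) idx(1,2) ne(3) by blast
  have ma: "maximum_antichain P (A p)" "maximum_antichain P (A t)" "maximum_antichain P (A s)"
    using R(2) idx by blast+
  then have sub: "A p \<subseteq> P" "A t \<subseteq> P" "A s \<subseteq> P" and ac: "antichain (A p)" "antichain (A t)" "antichain (A s)"
    unfolding maximum_antichain_def by auto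
  have le: "A p \<subseteq> down_set P (A t)" "A t \<subseteq> down_set P (A s)" "A p \<subseteq> down_set P (A s)"
    using assms(4,5) C(3) unfolding ac_less_def ac_le_def by auto
  have mx: "\<forall>z\<in>P. \<exists>a\<in>A p. a \<le> z \<or> z \<le> a" "\<forall>z\<in>P. \<exists>a\<in>A t. a \<le> z \<or> z \<le> a"
    using max_ac[OF R(1) ma(1)] max_ac[OF R(1) ma(2)] by auto
  note c1 = case1[OF sub ac d1 d2 d3 le mx(1)]
  note c2 = case2[OF sub ac d1 d2 d3 le mx]
  show ?thesis
  proof (cases "is_node (A p) (A t) M")
    case True
    then show ?thesis by (rule c1)
  next
    case False
    then have "is_node (A t) (A s) M" using assms(6) by simp
    then show ?thesis by (rule c2)
  qed
qed

end
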